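(* Let $n\ge3$. For real coefficients $c^{lm}_{ij}$ ($1\le i,j,l,m\le n$) with $c^{lm}_{ij}=c^{lm}_{ji}$, consider the homogeneous linear system in the $n^2$ unknowns $b^k_s$ ($1\le k,s\le n$) consisting of the equations $$(c^{lk}_{ij}-c^{li}_{kj})b^k_p+(c^{lp}_{kj}-c^{lk}_{pj})b^k_i+(c^{ki}_{pj}-c^{kp}_{ij})b^l_k+(c^{lp}_{ik}-c^{li}_{pk})b^k_j=0$$ for all $1\le i<p\le n$ and all $1\le j,l\le n$ (summation over the repeated index $k$ from $1$ to $n$). Then there exists a choice of such coefficients $c^{lm}_{ij}$, satisfying in addition that $c^{lp}_{ij}\neq0$ only if the set $\{i,j,l,p\}$ consists of exactly two distinct numbers, for which this system has an $n^2\times n^2$ nondegenerate minor; in particular, for this choice its only solution is $b^k_s=0$ for all $k,s$.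
   Context: This system is the compatibility condition $\partial_p(\mathcal{L}_{V_1}\Gamma_1)^l_{ij}=\partial_i(\mathcal{L}_{V_1}\Gamma_1)^l_{pj}$ for a linear vector field $V_1^k=\sum_s b^k_sx^s$ and a connection with Christoffel symbols $\Gamma^l_{ij}=\sum_m c^{lm}_{ij}x^m$, but the claim is purely about the stated linear system. *)

theory Defs
  imports "Jordan_Normal_Form.Determinant"
begin

text \<open>Indices are 0-based: the paper's index range 1..n becomes 0..n-1.
  c l m i j stands for c^{lm}_{ij}, and b k s stands for b^k_s.\<close>

definition eq_lhs ::
  "nat \<Rightarrow> (nat \<Rightarrow> nat \<Rightarrow> nat \<Rightarrow> nat \<Rightarrow> real) \<Rightarrow> (nat \<Rightarrow> nat \<Rightarrow> real)
   \<Rightarrow> nat \<Rightarrow> nat \<Rightarrow> nat \<Rightarrow> nat \<Rightarrow> real" where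
  "eq_lhs n c b i p j l =
     (\<Sum>k<n. (c l k i j - c l i k j) * b k p
            + (c l p k j - c l k p j) * b k i
            + (c k i p j - c k p i j) * b l k
            + (c l p i k - c l i p k) * b k j)"

definition eq_rows :: "nat \<Rightarrow> (nat \<times> nat \<times> nat \<times> nat) set" where
  "eq_rows n = {(i, p, j, l). i < p \<and> p < n \<and> j < n \<and> l < n}"

definition sys_coeff ::
  "nat \<Rightarrow> (nat \<Rightarrow> nat \<Rightarrow> nat \<Rightarrow> nat \<Rightarrow> real) \<Rightarrow> nat \<times> nat \<times> nat \<times> nat
   \<Rightarrow> nat \<Rightarrow> nat \<Rightarrow> real" where
  "sys_coeff n c r a s =
     (case r of (i, p, j, l) \<Rightarrow>
        eq_lhs n c (\<lambda>k t. if k = a \<and> t = s then 1 else 0) i p j l)"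

definition minor_mat ::
  "nat \<Rightarrow> (nat \<Rightarrow> nat \<Rightarrow> nat \<Rightarrow> nat \<Rightarrow> real) \<Rightarrow> (nat \<Rightarrow> nat \<times> nat \<times> nat \<times> nat)
   \<Rightarrow> real mat" where
  "minor_mat n c \<rho> = mat (n * n) (n * n) (\<lambda>(r, q). sys_coeff n c (\<rho> r) (q div n) (q mod n))"

end

theory Submission
  imports Defs
begin

definition c0 :: "nat \<Rightarrow> nat \<Rightarrow> nat \<Rightarrow> nat \<Rightarrow> real" where
  "c0 l m i j = (if i = l \<and> j = l \<and> m \<noteq> l then 1 else 0)"

lemma mult_if_delta: "(x::real) * (if P then 1 else 0) = (if P then x else 0)"
  by simp

lemma delta2:
  fixes n k t :: nat
  assumes "k < n" "t < n"
  shows "(\<Sum>a<n. \<Sum>s<n. B a s * (if k = a \<and> t = s then 1 else 0)) = (B k t :: real)"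
proof -
  have "(\<Sum>a<n. \<Sum>s<n. B a s * (if k = a \<and> t = s then 1 else 0)) =
        (\<Sum>a<n. if a = k then B k t else 0)"
    by (rule sum.cong) (simp, case_tac "x = k", simp_all add: assms mult_if_delta)
  also have "\<dots> = B k t" using assms by (simp add: sum.delta')
  finally show ?thesis .
qed

lemma lin:
  assumes "i < n" "p < n" "j < n" "l < n"
  shows "(\<Sum>a<n. \<Sum>s<n. B a s * sys_coeff n c (i,p,j,l) a s) = eq_lhs n c B i p j l"
proof -
  let ?d = "\<lambda>k t a s. (if k = a \<and> t = s then 1 else 0) :: real"
  have "(\<Sum>a<n. \<Sum>s<n. B a s * sys_coeff n c (i,p,j,l) a s) =
     (\<Sum>a<n. \<Sum>s<n. \<Sum>k<n. (c l k i j - c l i k j) * (B a s * ?d k p a s)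
            + (c l p k j - c l k p j) * (B a s * ?d k i a s)
            + (c k i p j - c k p i j) * (B a s * ?d l k a s)
            + (c l p i k - c l i p k) * (B a s * ?d k j a s))"
    unfolding sys_coeff_def eq_lhs_def by (simp add: sum_distrib_left algebra_simps)
  also have "\<dots> = (\<Sum>k<n. \<Sum>a<n. \<Sum>s<n. (c l k i j - c l i k j) * (B a s * ?d k p a s)
            + (c l p k j - c l k p j) * (B a s * ?d k i a s)
            + (c k i p j - c k p i j) * (B a s * ?d l k a s)
            + (c l p i k - c l i p k) * (B a s * ?d k j a s))"
    by (subst sum.swap, rule sum.cong, simp, subst sum.swap, simp)
  also have "\<dots> = (\<Sum>k<n. (c l k i j - c l i k j) * (\<Sum>a<n. \<Sum>s<n. B a s * ?d k p a s)
            + (c l p k j - c l k p j) * (\<Sum>a<n. \<Sum>s<n. B a s * ?d k i a s)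
            + (c k i p j - c k p i j) * (\<Sum>a<n. \<Sum>s<n. B a s * ?d l k a s)
            + (c l p i k - c l i p k) * (\<Sum>a<n. \<Sum>s<n. B a s * ?d k j a s))"
    by (simp add: sum.distrib sum_distrib_left)
  also have "\<dots> = eq_lhs n c B i p j l"
    unfolding eq_lhs_def
    by (rule sum.cong, simp, simp only: lessThan_iff delta2 assms)
  finally show ?thesis .
qed

lemma T1: "(\<Sum>k<n. (c0 l k i j - c0 l i k j) * b k p) =
   (\<Sum>k<n. if i = l \<and> j = l \<and> k \<noteq> l then b k p else 0)
   - (if j = l \<and> i \<noteq> l \<and> l < n then b l p else 0)"
proof -
  have "(\<Sum>k<n. (c0 l k i j - c0 l i k j) * b k p) =
     (\<Sum>k<n. (if i = l \<and> j = l \<and> k \<noteq> l then b k p else 0)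
          - (if k = l then (if j = l \<and> i \<noteq> l then b l p else 0) else 0))"
    by (rule sum.cong) (auto simp: c0_def)
  then show ?thesis by (simp only: sum_subtractf) simp
qed

lemma T2: "(\<Sum>k<n. (c0 l p k j - c0 l k p j) * b k i) =
   (if j = l \<and> p \<noteq> l \<and> l < n then b l i else 0)
   - (\<Sum>k<n. if p = l \<and> j = l \<and> k \<noteq> l then b k i else 0)"
proof -
  have "(\<Sum>k<n. (c0 l p k j - c0 l k p j) * b k i) =
     (\<Sum>k<n. (if k = l then (if j = l \<and> p \<noteq> l then b l i else 0) else 0)
         - (if p = l \<and> j = l \<and> k \<noteq> l then b k i else 0))"
    by (rule sum.cong) (auto simp: c0_def)
  then show ?thesis by (simp only: sum_subtractf) simp
qed

lemma T3: "(\<Sum>k<n. (c0 k i p j - c0 k p i j) * b l k) =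
   (if p = j \<and> i \<noteq> p \<and> p < n then b l p else 0)
   - (if i = j \<and> p \<noteq> i \<and> i < n then b l i else 0)"
proof -
  have "(\<Sum>k<n. (c0 k i p j - c0 k p i j) * b l k) =
     (\<Sum>k<n. (if k = p then (if p = j \<and> i \<noteq> p then b l p else 0) else 0)
         - (if k = i then (if i = j \<and> p \<noteq> i then b l i else 0) else 0))"
    by (rule sum.cong) (auto simp: c0_def)
  then show ?thesis by (simp add: sum_subtractf)
qed

lemma T4: "(\<Sum>k<n. (c0 l p i k - c0 l i p k) * b k j) =
   (if i = l \<and> p \<noteq> l \<and> l < n then b l j else 0)
   - (if p = l \<and> i \<noteq> l \<and> l < n then b l j else 0)"
proof -
  have "(\<Sum>k<n. (c0 l p i k - c0 l i p k) * b k j) =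
     (\<Sum>k<n. (if k = l then (if i = l \<and> p \<noteq> l then b l j else 0) else 0)
         - (if k = l then (if p = l \<and> i \<noteq> l then b l j else 0) else 0))"
    by (rule sum.cong) (auto simp: c0_def)
  then show ?thesis by (simp add: sum_subtractf)
qed

lemma c0_formula: "eq_lhs n c0 b i p j l =
   (\<Sum>k<n. (c0 l k i j - c0 l i k j) * b k p) + (\<Sum>k<n. (c0 l p k j - c0 l k p j) * b k i)
  + (\<Sum>k<n. (c0 k i p j - c0 k p i j) * b l k) + (\<Sum>k<n. (c0 l p i k - c0 l i p k) * b k j)"
  unfolding eq_lhs_def by (simp add: sum.distrib)

lemma c0_eq: "eq_lhs n c0 b i p j l =
   (\<Sum>k<n. if i = l \<and> j = l \<and> k \<noteq> l then b k p else 0)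
   - (if j = l \<and> i \<noteq> l \<and> l < n then b l p else 0)
   + ((if j = l \<and> p \<noteq> l \<and> l < n then b l i else 0)
   - (\<Sum>k<n. if p = l \<and> j = l \<and> k \<noteq> l then b k i else 0))
   + ((if p = j \<and> i \<noteq> p \<and> p < n then b l p else 0)
   - (if i = j \<and> p \<noteq> i \<and> i < n then b l i else 0))
   + ((if i = l \<and> p \<noteq> l \<and> l < n then b l j else 0)
   - (if p = l \<and> i \<noteq> l \<and> l < n then b l j else 0))"
  unfolding c0_formula T1 T2 T3 T4 ..

lemma rowA: "k < s \<Longrightarrow> s < n \<Longrightarrow> eq_lhs n c0 b k s s k = 2 * b k s"
  unfolding c0_eq by simp

lemma rowB: "s < k \<Longrightarrow> k < n \<Longrightarrow> eq_lhs n c0 b s k s k = - 2 * b k s"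
  unfolding c0_eq by simp

lemma rowC: "i < p \<Longrightarrow> p < n \<Longrightarrow> eq_lhs n c0 b i p i i = b i i + (\<Sum>k<n. if k \<noteq> i then b k p else 0)"
  unfolding c0_eq by simp


definition fsel :: "nat \<times> nat \<Rightarrow> nat \<times> nat \<times> nat \<times> nat" where
  "fsel ks = (case ks of (k, s) \<Rightarrow>
     if k < s then (k, s, s, k) else if s < k then (s, k, s, k)
     else if k = 0 then (1, 2, 1, 1) else (0, k, 0, 0))"

lemma fsel_in: "3 \<le> n \<Longrightarrow> k < n \<Longrightarrow> s < n \<Longrightarrow> fsel (k, s) \<in> eq_rows n"
  unfolding fsel_def eq_rows_def by auto

lemma fsel_inj: "fsel (k, s) = fsel (k', s') \<Longrightarrow> k = k' \<and> s = s'"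
  unfolding fsel_def by (auto split: if_splits)

lemma offdiag_sum:
  fixes n i p :: nat
  assumes "i \<noteq> p" "p < n" "\<And>k. k < n \<Longrightarrow> k \<noteq> p \<Longrightarrow> b k p = 0"
  shows "(\<Sum>k<n. if k \<noteq> i then b k p else 0) = (b p p :: real)"
proof -
  have "(\<Sum>k<n. if k \<noteq> i then b k p else 0) = (\<Sum>k<n. if k = p then b p p else 0)"
    by (rule sum.cong) (use assms in auto)
  then show ?thesis using assms by simp
qed

lemma kernel:
  assumes n3: "3 \<le> n"
    and h: "\<And>k s. k < n \<Longrightarrow> s < n \<Longrightarrow> (case fsel (k, s) of (i, p, j, l) \<Rightarrow> eq_lhs n c0 b i p j l) = 0"
  shows "\<forall>k<n. \<forall>s<n. b k s = 0"
proof -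
  have off: "b k s = 0" if "k < n" "s < n" "k \<noteq> s" for k s
  proof (cases "k < s")
    case True
    then have "eq_lhs n c0 b k s s k = 0" using h[OF that(1,2)] by (simp add: fsel_def)
    then show ?thesis using rowA[OF True that(2)] by simp
  next
    case False
    then have lt: "s < k" using that by simp
    then have "eq_lhs n c0 b s k s k = 0" using h[OF that(1,2)] by (simp add: fsel_def)
    then show ?thesis using rowB[OF lt that(1)] by simp
  qed
  have D: "b i i + b p p = 0" if "i < p" "p < n" "eq_lhs n c0 b i p i i = 0" for i p
  proof -
    have "(\<Sum>k<n. if k \<noteq> i then b k p else 0) = b p p"
      by (rule offdiag_sum) (use that off in auto)
    then show ?thesis using rowC[OF that(1,2)] that(3) by simp
  qed
  have d0k: "b 0 0 + b k k = 0" if "0 < k" "k < n" for k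
  proof -
    have "eq_lhs n c0 b 0 k 0 0 = 0" using h[OF that(2) that(2)] that by (simp add: fsel_def)
    then show ?thesis using D[OF that] by simp
  qed
  have d12: "b 1 1 + b 2 2 = 0"
  proof -
    have "eq_lhs n c0 b 1 2 1 1 = 0" using h[of 0 0] n3 by (simp add: fsel_def)
    then show ?thesis using D[of 1 2] n3 by simp
  qed
  have "b 0 0 + b 1 1 = 0" "b 0 0 + b 2 2 = 0" using d0k[of 1] d0k[of 2] n3 by auto
  then have b00: "b 0 0 = 0" using d12 by linarith
  show ?thesis
  proof (intro allI impI)
    fix k s assume ks: "k < n" "s < n"
    show "b k s = 0"
    proof (cases "k = s")
      case True
      show ?thesis
      proof (cases "k = 0")
        case True then show ?thesis using b00 \<open>k = s\<close> by simp
      next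
        case False then show ?thesis using d0k[of k] b00 ks \<open>k = s\<close> by simp
      qed
    next
      case False then show ?thesis using off ks by simp
    qed
  qed
qed

lemma reindex:
  fixes g :: "nat \<Rightarrow> nat \<Rightarrow> real"
  shows "(\<Sum>q<n*n. g (q div n) (q mod n)) = (\<Sum>a<n. \<Sum>s<n. g a s)"
proof -
  have "(\<Sum>a<n. \<Sum>s<n. g a s) = (\<Sum>(a,s)\<in>{..<n}\<times>{..<n}. g a s)"
    by (simp add: sum.cartesian_product)
  also have "\<dots> = (\<Sum>q<n*n. g (q div n) (q mod n))"
  proof (rule sum.reindex_bij_witness[where i="\<lambda>q. (q div n, q mod n)" and j="\<lambda>(a,s). a*n+s"])
    fix x assume x: "x \<in> {..<n}\<times>{..<n}"
    then obtain a s where xe: "x = (a, s)" and as: "a < n" "s < n" by auto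
    show "((case x of (a, s) \<Rightarrow> a * n + s) div n, (case x of (a, s) \<Rightarrow> a * n + s) mod n) = x"
      using as xe by simp
    have "a * n + s < a * n + n" using as by simp
    also have "\<dots> = (a + 1) * n" by simp
    also have "\<dots> \<le> n * n" using mult_le_mono1[of "a+1" n n] as by simp
    finally show "(case x of (a, s) \<Rightarrow> a * n + s) \<in> {..<n*n}" using xe by simp
    show "g ((case x of (a, s) \<Rightarrow> a * n + s) div n) ((case x of (a, s) \<Rightarrow> a * n + s) mod n) = (case x of (a, s) \<Rightarrow> g a s)"
      using as xe by simp
  next
    fix q assume q: "q \<in> {..<n*n}"
    then show "(case (q div n, q mod n) of (a, s) \<Rightarrow> a * n + s) = q" by simp
    from q have "n > 0" by (cases n) auto
    then show "(q div n, q mod n) \<in> {..<n}\<times>{..<n}" using q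
      by (auto simp: less_mult_imp_div_less)
  qed
  finally show ?thesis by simp
qed


lemma lin_case:
  assumes "r \<in> eq_rows n"
  shows "(\<Sum>a<n. \<Sum>s<n. B a s * sys_coeff n c r a s) = (case r of (i, p, j, l) \<Rightarrow> eq_lhs n c B i p j l)"
  using assms unfolding eq_rows_def by (auto intro!: lin)

lemma main_aux:
  fixes n :: nat
  assumes "n \<ge> 3"
  shows "(\<forall>l<n. \<forall>m<n. \<forall>i<n. \<forall>j<n. c0 l m i j = c0 l m j i) \<and>
    (\<forall>l<n. \<forall>p<n. \<forall>i<n. \<forall>j<n. c0 l p i j \<noteq> 0 \<longrightarrow> card {i, j, l, p} = 2) \<and>
    (\<exists>\<rho>. inj_on \<rho> {..<n * n} \<and> \<rho> ` {..<n * n} \<subseteq> eq_rows n \<and>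
         det (minor_mat n c0 \<rho>) \<noteq> 0) \<and>
    (\<forall>b :: nat \<Rightarrow> nat \<Rightarrow> real.
       (\<forall>(i, p, j, l) \<in> eq_rows n. eq_lhs n c0 b i p j l = 0) \<longrightarrow>
       (\<forall>k<n. \<forall>s<n. b k s = 0))"
proof (intro conjI)
  show "\<forall>l<n. \<forall>m<n. \<forall>i<n. \<forall>j<n. c0 l m i j = c0 l m j i"
    unfolding c0_def by auto
  show "\<forall>l<n. \<forall>p<n. \<forall>i<n. \<forall>j<n. c0 l p i j \<noteq> 0 \<longrightarrow> card {i, j, l, p} = 2"
    unfolding c0_def by (auto split: if_splits)
  have n0: "0 < n" using assms by simp
  define \<rho> where "\<rho> = (\<lambda>q. fsel (q div n, q mod n))"
  have rin: "\<rho> q \<in> eq_rows n" if "q < n * n" for q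
    unfolding \<rho>_def using fsel_in[OF assms] that n0 by (simp add: less_mult_imp_div_less)
  have rho_ks: "\<rho> (k * n + s) = fsel (k, s)" if "s < n" for k s
    unfolding \<rho>_def using that by simp
  show "\<forall>b :: nat \<Rightarrow> nat \<Rightarrow> real.
       (\<forall>(i, p, j, l) \<in> eq_rows n. eq_lhs n c0 b i p j l = 0) \<longrightarrow>
       (\<forall>k<n. \<forall>s<n. b k s = 0)"
  proof (rule allI, rule impI)
    fix b :: "nat \<Rightarrow> nat \<Rightarrow> real"
    assume H: "\<forall>(i, p, j, l) \<in> eq_rows n. eq_lhs n c0 b i p j l = 0"
    show "\<forall>k<n. \<forall>s<n. b k s = 0"
    proof (rule kernel[OF assms])
      fix k s assume "k < n" "s < n"
      then have "fsel (k, s) \<in> eq_rows n" by (rule fsel_in[OF assms])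
      then show "(case fsel (k, s) of (i, p, j, l) \<Rightarrow> eq_lhs n c0 b i p j l) = 0"
        using H by auto
    qed
  qed
  show "\<exists>\<rho>. inj_on \<rho> {..<n * n} \<and> \<rho> ` {..<n * n} \<subseteq> eq_rows n \<and> det (minor_mat n c0 \<rho>) \<noteq> 0"
  proof (rule exI[of _ \<rho>], intro conjI)
    show "inj_on \<rho> {..<n * n}"
    proof (rule inj_onI)
      fix x y assume "x \<in> {..<n*n}" "y \<in> {..<n*n}" "\<rho> x = \<rho> y"
      then have "x div n = y div n" "x mod n = y mod n" unfolding \<rho>_def using fsel_inj by blast+
      then show "x = y" by (metis div_mult_mod_eq)
    qed
    show "\<rho> ` {..<n * n} \<subseteq> eq_rows n" using rin by auto
    let ?M = "minor_mat n c0 \<rho>"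
    have car: "?M \<in> carrier_mat (n*n) (n*n)" unfolding minor_mat_def by simp
    show "det ?M \<noteq> 0"
    proof
      assume "det ?M = 0"
      then obtain v where v: "v \<in> carrier_vec (n*n)" "v \<noteq> 0\<^sub>v (n*n)" "?M *\<^sub>v v = 0\<^sub>v (n*n)"
        using det_0_iff_vec_prod_zero[OF car] by blast
      define B where "B = (\<lambda>a s. v $ (a * n + s))"
      have row: "(?M *\<^sub>v v) $ r = (\<Sum>a<n. \<Sum>s<n. B a s * sys_coeff n c0 (\<rho> r) a s)" if r: "r < n*n" for r
      proof -
        have "(?M *\<^sub>v v) $ r = (\<Sum>q<n*n. v $ q * sys_coeff n c0 (\<rho> r) (q div n) (q mod n))"
          using r v(1) unfolding minor_mat_def
          by (simp add: scalar_prod_def atLeast0LessThan mult.commute)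
        also have "\<dots> = (\<Sum>q<n*n. B (q div n) (q mod n) * sys_coeff n c0 (\<rho> r) (q div n) (q mod n))"
          unfolding B_def using n0 by simp
        also have "\<dots> = (\<Sum>a<n. \<Sum>s<n. B a s * sys_coeff n c0 (\<rho> r) a s)"
          by (rule reindex)
        finally show ?thesis .
      qed
      have "\<forall>k<n. \<forall>s<n. B k s = 0"
      proof (rule kernel[OF assms])
        fix k s assume ks: "k < n" "s < n"
        have r: "k * n + s < n * n"
        proof -
          have "k * n + s < k * n + n" using ks by simp
          also have "\<dots> = (k + 1) * n" by simp
          also have "\<dots> \<le> n * n" using mult_le_mono1[of "k+1" n n] ks by simp
          finally show ?thesis .
        qed
        have "0 = (?M *\<^sub>v v) $ (k * n + s)" using v(3) r by simp
        also have "\<dots> = (\<Sum>a<n. \<Sum>s'<n. B a s' * sys_coeff n c0 (fsel (k, s)) a s')"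
          using row[OF r] rho_ks[OF ks(2)] by simp
        also have "\<dots> = (case fsel (k, s) of (i, p, j, l) \<Rightarrow> eq_lhs n c0 B i p j l)"
          by (rule lin_case[OF fsel_in[OF assms ks]])
        finally show "(case fsel (k, s) of (i, p, j, l) \<Rightarrow> eq_lhs n c0 B i p j l) = 0" by simp
      qed
      then have "v = 0\<^sub>v (n*n)"
      proof -
        assume Bz: "\<forall>k<n. \<forall>s<n. B k s = 0"
        show ?thesis
        proof (rule eq_vecI)
          show "dim_vec v = dim_vec (0\<^sub>v (n*n))" using v(1) by simp
          fix q assume "q < dim_vec (0\<^sub>v (n*n))"
          then have q: "q < n * n" by simp
          have "v $ q = B (q div n) (q mod n)" unfolding B_def by simp
          also have "\<dots> = 0" using Bz q n0 by (simp add: less_mult_imp_div_less)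
          finally show "v $ q = 0\<^sub>v (n*n) $ q" using q by simp
        qed
      qed
      with v(2) show False by simp
    qed
  qed
qed


theorem mainTheorem3:
  fixes n :: nat
  assumes "n \<ge> 3"
  shows "\<exists>c :: nat \<Rightarrow> nat \<Rightarrow> nat \<Rightarrow> nat \<Rightarrow> real.
    (\<forall>l<n. \<forall>m<n. \<forall>i<n. \<forall>j<n. c l m i j = c l m j i) \<and>
    (\<forall>l<n. \<forall>p<n. \<forall>i<n. \<forall>j<n. c l p i j \<noteq> 0 \<longrightarrow> card {i, j, l, p} = 2) \<and>
    (\<exists>\<rho>. inj_on \<rho> {..<n * n} \<and> \<rho> ` {..<n * n} \<subseteq> eq_rows n \<and>
         det (minor_mat n c \<rho>) \<noteq> 0) \<and>
    (\<forall>b :: nat \<Rightarrow> nat \<Rightarrow> real.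
       (\<forall>(i, p, j, l) \<in> eq_rows n. eq_lhs n c b i p j l = 0) \<longrightarrow>
       (\<forall>k<n. \<forall>s<n. b k s = 0))"
  using main_aux[OF assms] by (rule exI[of _ c0])

end
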